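(* Let $\Phi$ be a real, additive gain graph on $\{1,\dots,n\}$ with edge set $E$ and let $\mathbf{Q}\in(\mathbb{E}^d)^n$. If $\mathbf{Q}$ has ideal general position and, for every edge set $S\subseteq E$ that is a forest with $d+1$ edges, $\bigcap_{e\in S}h(e)=\emptyset$ in $\mathcal{H}(\Phi;\mathbf{Q})$, then $\mathbf{Q}$ has general position with respect to $\Phi$.
   Context: A real, additive gain graph $\Phi$ on $V=\{1,\dots,n\}$: finite graph with edge set $E$ (multiple edges allowed, every edge with two distinct endpoints) and gains $\phi(e;i,j)\in\mathbb{R}$ with $\phi(e;j,i)=-\phi(e;i,j)$. $S\subseteq E$ is balanced if every circle in $S$ has gain sum $0$ (read consistently); a forest is an edge set containing no circle; $c(S)$ counts components of $(V,S)$, isolated vertices included. With $\psi_{ij}(P)=d(P,Q_i)^2-d(P,Q_j)^2$, $\mathcal{H}(\Phi;\mathbf{Q})$ consists of the hyperplanes $h(e)=\{P:\psi_{ij}(P)=\phi(e;i,j)\}$ for edges $e$ with endpoints $i,j$. $\mathcal{L}(\mathcal{H})$: nonempty intersections of subsets of $\mathcal{H}$ (including $\mathbb{E}^d$) ordered by reverse inclusion; $E(s)=\{e:h(e)\supseteq s\}$. Ideal general position: the points are distinct and, with $\mathbb{E}^d\subset\mathbb{P}^d$, $h_\infty$ the ideal hyperplane and $p_{ij}$ the ideal point of line $Q_iQ_j$, for every set $T$ of unordered pairs the projective span of $\{p_{ij}:\{i,j\}\in T\}$ has dimension $\min(n-c(T),d)-1$, $c(T)$ being the number of components of $(\{1,\dots,n\},T)$.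 A balanced flat is a balanced $S\subseteq E$ such that every $e\notin S$ with both endpoints in one component of $(V,S)$ makes $S\cup\{e\}$ unbalanced; rank $n-c(S)$. General position with respect to $\Phi$: $s\mapsto E(s)$ is a poset isomorphism from $\mathcal{L}(\mathcal{H}(\Phi;\mathbf{Q}))$ onto the poset (by inclusion) of balanced flats of rank at most $d$. *)

theory Defs
  imports "HOL-Analysis.Analysis"
begin

(* A real additive gain graph on V = {1..n}:
   E :: 'e set (finite; parallel edges allowed since edges are abstract),
   ends e = (i,j) with i \<noteq> j, both in {1..n}   (a reference orientation of e),
   gain e = \<phi>(e;i,j) for ends e = (i,j); hence \<phi>(e;j,i) = - gain e. *)

definition gain_graph :: "nat \<Rightarrow> 'e set \<Rightarrow> ('e \<Rightarrow> nat \<times> nat) \<Rightarrow> bool" where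
  "gain_graph n E ends \<longleftrightarrow> finite E \<and>
     (\<forall>e\<in>E. fst (ends e) \<in> {1..n} \<and> snd (ends e) \<in> {1..n} \<and> fst (ends e) \<noteq> snd (ends e))"

definition phi :: "('e \<Rightarrow> nat \<times> nat) \<Rightarrow> ('e \<Rightarrow> real) \<Rightarrow> 'e \<Rightarrow> nat \<Rightarrow> nat \<Rightarrow> real" where
  "phi ends gain e u v = (if ends e = (u, v) then gain e else - gain e)"

(* es = [e_0,...,e_{m-1}], vs = [v_0,...,v_{m-1}]: a circle passing v_0 e_0 v_1 e_1 ... v_{m-1} e_{m-1} v_0 *)
definition is_circle :: "('e \<Rightarrow> nat \<times> nat) \<Rightarrow> 'e list \<Rightarrow> nat list \<Rightarrow> bool" where
  "is_circle ends es vs \<longleftrightarrow> length es = length vs \<and> length es \<ge> 2 \<and> distinct es \<and> distinct vs \<and>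
     (\<forall>k < length es. ends (es ! k) = (vs ! k, vs ! ((k + 1) mod length vs))
                    \<or> ends (es ! k) = (vs ! ((k + 1) mod length vs), vs ! k))"

definition circle_gain :: "('e \<Rightarrow> nat \<times> nat) \<Rightarrow> ('e \<Rightarrow> real) \<Rightarrow> 'e list \<Rightarrow> nat list \<Rightarrow> real" where
  "circle_gain ends gain es vs = (\<Sum>k < length es. phi ends gain (es ! k) (vs ! k) (vs ! ((k + 1) mod length vs)))"

definition balanced :: "('e \<Rightarrow> nat \<times> nat) \<Rightarrow> ('e \<Rightarrow> real) \<Rightarrow> 'e set \<Rightarrow> bool" where
  "balanced ends gain S \<longleftrightarrow>
     (\<forall>es vs. is_circle ends es vs \<and> set es \<subseteq> S \<longrightarrow> circle_gain ends gain es vs = 0)"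

definition is_forest :: "('e \<Rightarrow> nat \<times> nat) \<Rightarrow> 'e set \<Rightarrow> bool" where
  "is_forest ends S \<longleftrightarrow> \<not> (\<exists>es vs. is_circle ends es vs \<and> set es \<subseteq> S)"

(* "same component" relation of the graph ({1..n}, R), R a set of (unordered, given as ordered) pairs *)
definition comp_rel :: "nat \<Rightarrow> (nat \<times> nat) set \<Rightarrow> (nat \<times> nat) set" where
  "comp_rel n R = {(u, v). u \<in> {1..n} \<and> v \<in> {1..n} \<and> (u, v) \<in> (R \<union> R\<inverse>)\<^sup>*}"

(* number of components, isolated vertices included *)
definition ncomp :: "nat \<Rightarrow> (nat \<times> nat) set \<Rightarrow> nat" where
  "ncomp n R = card ({1..n} // comp_rel n R)"

definition ncomp_edges :: "nat \<Rightarrow> ('e \<Rightarrow> nat \<times> nat) \<Rightarrow> 'e set \<Rightarrow> nat" where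
  "ncomp_edges n ends S = ncomp n (ends ` S)"

definition balanced_flat :: "nat \<Rightarrow> 'e set \<Rightarrow> ('e \<Rightarrow> nat \<times> nat) \<Rightarrow> ('e \<Rightarrow> real) \<Rightarrow> 'e set \<Rightarrow> bool" where
  "balanced_flat n E ends gain S \<longleftrightarrow> S \<subseteq> E \<and> balanced ends gain S \<and>
     (\<forall>e \<in> E - S. (fst (ends e), snd (ends e)) \<in> comp_rel n (ends ` S)
                  \<longrightarrow> \<not> balanced ends gain (insert e S))"

definition flat_rank :: "nat \<Rightarrow> ('e \<Rightarrow> nat \<times> nat) \<Rightarrow> 'e set \<Rightarrow> nat" where
  "flat_rank n ends S = n - ncomp_edges n ends S"

definition psi :: "(nat \<Rightarrow> 'a::euclidean_space) \<Rightarrow> nat \<Rightarrow> nat \<Rightarrow> 'a \<Rightarrow> real" where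
  "psi Q i j P = (dist P (Q i))\<^sup>2 - (dist P (Q j))\<^sup>2"

definition hyp :: "(nat \<Rightarrow> 'a::euclidean_space) \<Rightarrow> ('e \<Rightarrow> nat \<times> nat) \<Rightarrow> ('e \<Rightarrow> real) \<Rightarrow> 'e \<Rightarrow> 'a set" where
  "hyp Q ends gain e = {P. psi Q (fst (ends e)) (snd (ends e)) P = phi ends gain e (fst (ends e)) (snd (ends e))}"

(* \<L>(\<H>): nonempty intersections of subsets of \<H> (empty intersection = whole space) *)
definition lattice_of :: "(nat \<Rightarrow> 'a::euclidean_space) \<Rightarrow> 'e set \<Rightarrow> ('e \<Rightarrow> nat \<times> nat) \<Rightarrow> ('e \<Rightarrow> real) \<Rightarrow> 'a set set" where
  "lattice_of Q E ends gain = {s. s \<noteq> {} \<and> (\<exists>A \<subseteq> E. s = (\<Inter>e\<in>A. hyp Q ends gain e))}"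

definition edges_of :: "(nat \<Rightarrow> 'a::euclidean_space) \<Rightarrow> 'e set \<Rightarrow> ('e \<Rightarrow> nat \<times> nat) \<Rightarrow> ('e \<Rightarrow> real) \<Rightarrow> 'a set \<Rightarrow> 'e set" where
  "edges_of Q E ends gain s = {e \<in> E. s \<subseteq> hyp Q ends gain e}"

(* The ideal point p_ij of line Q_iQ_j is the projective point
   of the direction Q_j - Q_i; the projective span of a set of ideal points has
   projective dimension (linear dimension of the span of the directions) - 1.
   So "proj. dim = min(n - c(T), d) - 1" is "dim span = min(n - c(T), d)". *)
definition ideal_general_position :: "nat \<Rightarrow> (nat \<Rightarrow> 'a::euclidean_space) \<Rightarrow> bool" where
  "ideal_general_position n Q \<longleftrightarrow> inj_on Q {1..n} \<and>
     (\<forall>T \<subseteq> {(i, j). i \<in> {1..n} \<and> j \<in> {1..n} \<and> i < j}.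
        dim ((\<lambda>(i, j). Q j - Q i) ` T) = min (n - ncomp n T) DIM('a))"

(* general position w.r.t. \<Phi>: s \<mapsto> E(s) is a poset isomorphism from \<L>(\<H>) (reverse inclusion)
   onto the balanced flats of rank \<le> d (inclusion) *)
definition general_position :: "nat \<Rightarrow> 'e set \<Rightarrow> ('e \<Rightarrow> nat \<times> nat) \<Rightarrow> ('e \<Rightarrow> real) \<Rightarrow> (nat \<Rightarrow> 'a::euclidean_space) \<Rightarrow> bool" where
  "general_position n E ends gain Q \<longleftrightarrow>
     bij_betw (edges_of Q E ends gain) (lattice_of Q E ends gain)
        {S. balanced_flat n E ends gain S \<and> flat_rank n ends S \<le> DIM('a)} \<and>
     (\<forall>s \<in> lattice_of Q E ends gain. \<forall>t \<in> lattice_of Q E ends gain.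
        t \<subseteq> s \<longleftrightarrow> edges_of Q E ends gain s \<subseteq> edges_of Q E ends gain t)"

end

theory Submission
  imports Defs
begin


abbreviation conn :: "(nat \<times> nat) set \<Rightarrow> (nat \<times> nat) set" where
  "conn R \<equiv> (R \<union> R\<inverse>)\<^sup>*"

lemma conn_sym: "(x,y) \<in> conn R \<Longrightarrow> (y,x) \<in> conn R"
  by (metis converse_Un converse_converse rtrancl_converseI sup_commute)

lemma conn_base: "(x,y) \<in> R \<Longrightarrow> (x,y) \<in> conn R"  "(x,y) \<in> R \<Longrightarrow> (y,x) \<in> conn R"
  by auto

lemma conn_eqI: "R1 \<subseteq> conn R2 \<Longrightarrow> R2 \<subseteq> conn R1 \<Longrightarrow> conn R1 = conn R2"
proof -
  assume a: "R1 \<subseteq> conn R2" "R2 \<subseteq> conn R1"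
  have "R1 \<union> R1\<inverse> \<subseteq> conn R2" using a(1) conn_sym by auto
  moreover have "R2 \<union> R2\<inverse> \<subseteq> conn R1" using a(2) conn_sym by auto
  ultimately show ?thesis by (meson rtrancl_subset_rtrancl subset_antisym)
qed

lemma conn_insert_same: "p \<in> conn R \<Longrightarrow> conn (insert p R) = conn R"
  by (rule conn_eqI) auto

lemma conn_insert_cong: "conn R1 = conn R2 \<Longrightarrow> conn (insert p R1) = conn (insert p R2)"
proof (rule conn_eqI)
  assume e: "conn R1 = conn R2"
  have "R1 \<subseteq> conn R2" using e by auto
  also have "conn R2 \<subseteq> conn (insert p R2)" by (rule rtrancl_mono) auto
  finally show "insert p R1 \<subseteq> conn (insert p R2)" by auto
next
  assume e: "conn R1 = conn R2"
  have "R2 \<subseteq> conn R1" using e by auto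
  also have "conn R1 \<subseteq> conn (insert p R1)" by (rule rtrancl_mono) auto
  finally show "insert p R2 \<subseteq> conn (insert p R1)" by auto
qed

lemma comp_rel_conn: "comp_rel n R = {(u,v). u \<in> {1..n} \<and> v \<in> {1..n} \<and> (u,v) \<in> conn R}"
  by (simp add: comp_rel_def)

lemma ncomp_cong: "conn R1 = conn R2 \<Longrightarrow> ncomp n R1 = ncomp n R2"
  by (simp add: ncomp_def comp_rel_def)

lemma equiv_comp_rel: "equiv {1..n} (comp_rel n R)"
  unfolding equiv_def refl_on_def sym_def trans_def comp_rel_def
  using conn_sym by (auto intro: rtrancl_trans)

lemma ncomp_empty: "ncomp n {} = n"
proof -
  have "comp_rel n {} = Id_on {1..n}" by (auto simp: comp_rel_def)
  hence "{1..n} // comp_rel n {} = (\<lambda>x. {x}) ` {1..n}"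
    by (auto simp: quotient_def)
  thus ?thesis unfolding ncomp_def by (simp add: card_image)
qed

lemma conn_insert_eq:
  shows "conn (insert (a,b) R) = conn R \<union> {(x,y). (x,a) \<in> conn R \<and> (b,y) \<in> conn R}
          \<union> {(x,y). (x,b) \<in> conn R \<and> (a,y) \<in> conn R}"
proof -
  have e: "insert (a,b) R \<union> (insert (a,b) R)\<inverse> = insert (a,b) (insert (b,a) (R \<union> R\<inverse>))" by auto
  have t: "\<And>x y z. (x,y) \<in> conn R \<Longrightarrow> (y,z) \<in> conn R \<Longrightarrow> (x,z) \<in> conn R" by (rule rtrancl_trans)
  have r: "\<And>x. (x,x) \<in> conn R" by simp
  show ?thesis unfolding e rtrancl_insert
    apply (rule set_eqI)
    apply (clarsimp simp only: Un_iff mem_Collect_eq split_paired_all case_prod_conv)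
    using t r by meson
qed

lemma ncomp_insert:
  assumes a: "a \<in> {1..n}" and b: "b \<in> {1..n}" and nc: "(a,b) \<notin> conn R"
  shows "ncomp n (insert (a,b) R) + 1 = ncomp n R"
proof -
  let ?c = "comp_rel n R" and ?c' = "comp_rel n (insert (a,b) R)"
  define A where "A = ?c `` {a}"
  define B where "B = ?c `` {b}"
  have eqv: "equiv {1..n} ?c" by (rule equiv_comp_rel)
  have t: "\<And>x y z. (x,y) \<in> conn R \<Longrightarrow> (y,z) \<in> conn R \<Longrightarrow> (x,z) \<in> conn R" by (rule rtrancl_trans)
  have sy: "\<And>x y. (x,y) \<in> conn R \<Longrightarrow> (y,x) \<in> conn R" by (rule conn_sym)
  have cls: "?c' `` {x} = (if x \<in> A \<union> B then A \<union> B else ?c `` {x})" if x: "x \<in> {1..n}" for x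
  proof (cases "x \<in> A \<union> B")
    case True
    then show ?thesis using x a b unfolding A_def B_def comp_rel_conn conn_insert_eq
      apply (simp add: set_eq_iff)
      using t sy by meson
  next
    case False
    then show ?thesis using x a b unfolding A_def B_def comp_rel_conn conn_insert_eq
      apply (simp add: set_eq_iff)
      using t sy by meson
  qed
  have AQ: "A \<in> {1..n} // ?c" using a by (auto simp: A_def quotient_def)
  have BQ: "B \<in> {1..n} // ?c" using b by (auto simp: B_def quotient_def)
  have AB: "A \<noteq> B"
  proof -
    have "b \<in> B" using b by (auto simp: B_def comp_rel_def)
    moreover have "b \<notin> A" using nc by (auto simp: A_def comp_rel_def)
    ultimately show ?thesis by auto
  qed
  have quot: "{1..n} // ?c' = insert (A \<union> B) ({1..n} // ?c - {A, B})"
  proof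
    show "{1..n} // ?c' \<subseteq> insert (A \<union> B) ({1..n} // ?c - {A, B})"
    proof
      fix X assume "X \<in> {1..n} // ?c'"
      then obtain x where x: "x \<in> {1..n}" "X = ?c' `` {x}" by (auto simp: quotient_def)
      show "X \<in> insert (A \<union> B) ({1..n} // ?c - {A, B})"
      proof (cases "x \<in> A \<union> B")
        case True thus ?thesis using cls[OF x(1)] x by auto
      next
        case False
        have "?c `` {x} \<noteq> A" using False x(1) eqv by (metis Un_iff equiv_class_self)
        moreover have "?c `` {x} \<noteq> B" using False x(1) eqv by (metis Un_iff equiv_class_self)
        ultimately show ?thesis using cls[OF x(1)] x False by (auto simp: quotient_def)
      qed
    qed
  next
    show "insert (A \<union> B) ({1..n} // ?c - {A, B}) \<subseteq> {1..n} // ?c'"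
    proof
      fix X assume X: "X \<in> insert (A \<union> B) ({1..n} // ?c - {A, B})"
      show "X \<in> {1..n} // ?c'"
      proof (cases "X = A \<union> B")
        case True
        have "a \<in> A" using a by (auto simp: A_def comp_rel_def)
        hence "?c' `` {a} = A \<union> B" using cls[OF a] by auto
        thus ?thesis using True a by (auto simp: quotient_def)
      next
        case False
        have X1: "X \<in> {1..n} // ?c" "X \<noteq> A" "X \<noteq> B" using X False by auto
        then obtain x where x0: "x \<in> {1..n}" "X = ?c `` {x}" unfolding quotient_def by blast
        have x: "x \<in> {1..n}" "X = ?c `` {x}" "X \<noteq> A" "X \<noteq> B" using x0 X1 by auto
        have "x \<notin> A" using x eqv unfolding A_def
          by (metis Image_singleton_iff equiv_class_eq_iff)
        moreover have "x \<notin> B" using x eqv unfolding B_def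
          by (metis Image_singleton_iff equiv_class_eq_iff)
        ultimately have "?c' `` {x} = X" using cls[OF x(1)] x by auto
        thus ?thesis using x by (auto simp: quotient_def)
      qed
    qed
  qed
  have fin: "finite ({1..n} // ?c)" by (rule finite_quotient) (auto simp: comp_rel_def)
  have notin: "A \<union> B \<notin> {1..n} // ?c - {A, B}"
  proof
    assume "A \<union> B \<in> {1..n} // ?c - {A, B}"
    hence C: "A \<union> B \<in> {1..n} // ?c" "A \<union> B \<noteq> A" by auto
    have "A \<noteq> {}" using AQ eqv in_quotient_imp_non_empty by blast
    hence "A \<inter> (A \<union> B) \<noteq> {}" by auto
    hence "A = A \<union> B" using quotient_disj[OF eqv AQ C(1)] by auto
    thus False using C(2) by simp
  qed
  have C1: "card ({1..n} // ?c') = card ({1..n} // ?c - {A, B}) + 1"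
    unfolding quot using fin notin by simp
  have C2: "card ({1..n} // ?c - {A, B}) + 2 = card ({1..n} // ?c)"
  proof -
    have "card {A, B} \<le> card ({1..n} // ?c)" using AQ BQ fin by (intro card_mono) auto
    thus ?thesis using AQ BQ AB fin by (simp add: card_Diff_subset)
  qed
  show ?thesis unfolding ncomp_def using C1 C2 by simp
qed



lemma cyc_tele:
  fixes m :: nat
  assumes "0 < m" shows "(\<Sum>k<m. g k - g ((k+1) mod m)) = (0::real)"
proof -
  obtain m' where m: "m = Suc m'" using assms by (cases m) auto
  have "(\<Sum>k<m. g ((k+1) mod m)) = (\<Sum>k<m'. g ((k+1) mod m)) + g 0"
    unfolding m by (simp add: sum.lessThan_Suc)
  also have "(\<Sum>k<m'. g ((k+1) mod m)) = (\<Sum>k<m'. g (Suc k))"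
    by (rule sum.cong) (auto simp: m)
  also have "(\<Sum>k<m'. g (Suc k)) + g 0 = (\<Sum>k<m. g k)"
    unfolding m by (simp only: sum.lessThan_Suc_shift)
  finally show ?thesis by (simp add: sum_subtractf)
qed

definition pot :: "(nat \<Rightarrow> 'a::euclidean_space) \<Rightarrow> 'a \<Rightarrow> nat \<Rightarrow> real" where
  "pot Q P i = (dist P (Q i))\<^sup>2"

lemma hyp_iff: "P \<in> hyp Q ends gain f \<longleftrightarrow> pot Q P (fst (ends f)) - pot Q P (snd (ends f)) = gain f"
  by (simp add: hyp_def psi_def phi_def pot_def)

lemma phi_cons:
  assumes "P \<in> hyp Q ends gain f" "ends f = (u,w) \<or> ends f = (w,u)"
  shows "phi ends gain f u w = pot Q P u - pot Q P w"
proof (cases "ends f = (u,w)")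
  case True
  then show ?thesis using assms(1) unfolding hyp_iff phi_def by simp
next
  case False
  hence e: "ends f = (w,u)" using assms(2) by blast
  have "phi ends gain f u w = - gain f" using False unfolding phi_def by simp
  also have "gain f = pot Q P w - pot Q P u" using assms(1) e unfolding hyp_iff by simp
  finally show ?thesis by simp
qed

lemma balanced_cons:
  assumes "\<forall>f\<in>S. P \<in> hyp Q ends gain f"
  shows "balanced ends gain S"
  unfolding balanced_def
proof (intro allI impI)
  fix es vs assume h: "is_circle ends es vs \<and> set es \<subseteq> S"
  let ?m = "length es"
  have m: "0 < ?m" "length vs = ?m" using h by (auto simp: is_circle_def)
  have "circle_gain ends gain es vs = (\<Sum>k<?m. pot Q P (vs!k) - pot Q P (vs!((k+1) mod ?m)))"
    unfolding circle_gain_def m(2)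
  proof (rule sum.cong)
    fix k assume k: "k \<in> {..<?m}"
    have "es!k \<in> S" using h k by auto
    thus "phi ends gain (es ! k) (vs ! k) (vs ! ((k + 1) mod ?m)) = pot Q P (vs!k) - pot Q P (vs!((k+1) mod ?m))"
      using h k m assms by (intro phi_cons) (auto simp: is_circle_def)
  qed simp
  also have "\<dots> = 0" by (rule cyc_tele) (use m in simp)
  finally show "circle_gain ends gain es vs = 0" .
qed

lemma conn_path:
  assumes "(x,y) \<in> Rs\<^sup>*"
  shows "\<exists>vs. vs \<noteq> [] \<and> hd vs = x \<and> last vs = y \<and> distinct vs \<and> (\<forall>k. Suc k < length vs \<longrightarrow> (vs!k, vs!Suc k) \<in> Rs)"
  using assms
proof (induction rule: converse_rtrancl_induct)
  case base
  then show ?case by (intro exI[of _ "[y]"]) auto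
next
  case (step x z)
  then obtain vs where vs: "vs \<noteq> []" "hd vs = z" "last vs = y" "distinct vs" "\<forall>k. Suc k < length vs \<longrightarrow> (vs!k, vs!Suc k) \<in> Rs" by blast
  show ?case
  proof (cases "x \<in> set vs")
    case False
    have "\<forall>k. Suc k < length (x#vs) \<longrightarrow> ((x#vs)!k, (x#vs)!Suc k) \<in> Rs"
    proof (intro allI impI)
      fix k assume "Suc k < length (x#vs)"
      thus "((x#vs)!k, (x#vs)!Suc k) \<in> Rs" using vs step(1)
        by (cases k) (auto simp: hd_conv_nth)
    qed
    then show ?thesis using False vs by (intro exI[of _ "x#vs"]) auto
  next
    case True
    then obtain i where i: "i < length vs" "vs!i = x" by (auto simp: in_set_conv_nth)
    show ?thesis
    proof (intro exI[of _ "drop i vs"] conjI allI impI)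
      show "drop i vs \<noteq> []" using i by simp
      show "hd (drop i vs) = x" using i by (simp add: hd_drop_conv_nth)
      show "last (drop i vs) = y" using i vs by simp
      show "distinct (drop i vs)" using vs by simp
      fix k assume "Suc k < length (drop i vs)"
      thus "(drop i vs ! k, drop i vs ! Suc k) \<in> Rs" using vs(5) i
        by (simp add: add.commute)
    qed
  qed
qed

lemma mod_wrap: "p < m \<Longrightarrow> t < m \<Longrightarrow> (p + t) mod m = (if p + t < m then p + t else p + t - (m::nat))"
proof (cases "p + t < m")
  case False
  assume "p < m" "t < m"
  hence "(p + t) mod m = (p + t - m) mod m" using False by (simp add: le_mod_geq)
  also have "\<dots> = p + t - m" using False \<open>p < m\<close> \<open>t < m\<close> by (intro mod_less) linarith
  finally show ?thesis using False by simp
qed simp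

lemma forest_insert:
  assumes F: "is_forest ends F" and e: "ends e = (a,b)" and nc: "(a,b) \<notin> conn (ends ` F)"
  shows "is_forest ends (insert e F)"
  unfolding is_forest_def
proof
  assume "\<exists>es vs. is_circle ends es vs \<and> set es \<subseteq> insert e F"
  then obtain es vs where c: "is_circle ends es vs" "set es \<subseteq> insert e F" by blast
  let ?m = "length es"
  have m: "2 \<le> ?m" "length vs = ?m" "distinct es" using c by (auto simp: is_circle_def)
  have ends_k: "ends (es ! k) = (vs ! k, vs ! ((k + 1) mod ?m)) \<or> ends (es ! k) = (vs ! ((k + 1) mod ?m), vs ! k)"
    if "k < ?m" for k using c(1) that m by (auto simp: is_circle_def)
  have "e \<in> set es" using c F unfolding is_forest_def by blast
  then obtain p where p: "p < ?m" "es!p = e" by (auto simp: in_set_conv_nth)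
  have inF: "es!k \<in> F" if "k < ?m" "k \<noteq> p" for k
  proof -
    have "es!k \<noteq> e" using m(3) p that by (metis nth_eq_iff_index_eq)
    thus ?thesis using c(2) that by (meson insertE nth_mem subsetD)
  qed
  have stepk: "(vs ! k, vs ! ((k + 1) mod ?m)) \<in> conn (ends ` F)" if "k < ?m" "k \<noteq> p" for k
  proof -
    have "ends (es!k) \<in> ends ` F" using inF[OF that] by simp
    thus ?thesis using ends_k[OF that(1)] by (metis conn_base)
  qed
  have claim: "(vs ! ((p+1) mod ?m), vs ! ((p+1+t) mod ?m)) \<in> conn (ends ` F)" if "t < ?m" for t
    using that
  proof (induction t)
    case 0 then show ?case by simp
  next
    case (Suc t)
    let ?k = "(p+1+t) mod ?m"
    have km: "?k < ?m" using m by (intro mod_less_divisor) linarith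
    have kp: "?k \<noteq> p"
    proof
      assume "?k = p"
      have "(p + Suc t) mod ?m = (if p + Suc t < ?m then p + Suc t else p + Suc t - ?m)"
        using p Suc by (intro mod_wrap) auto
      thus False using \<open>?k = p\<close> Suc(2) by (auto split: if_splits)
    qed
    have eq: "((?k + 1) mod ?m) = (p + 1 + Suc t) mod ?m" by (simp add: mod_Suc_eq)
    have ih: "(vs ! ((p+1) mod ?m), vs ! ?k) \<in> conn (ends ` F)" using Suc by simp
    have "(vs ! ?k, vs ! ((p + 1 + Suc t) mod ?m)) \<in> conn (ends ` F)"
      using stepk[OF km kp] unfolding eq .
    then show ?case using ih by (rule rtrancl_trans[rotated])
  qed
  have "(vs ! ((p+1) mod ?m), vs ! ((p+1+(?m - 1)) mod ?m)) \<in> conn (ends ` F)"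
    using m by (intro claim) auto
  moreover have "(p+1+(?m - 1)) mod ?m = p"
  proof -
    have "p+1+(?m - 1) = p + ?m" using m by simp
    thus ?thesis using p by simp
  qed
  ultimately have "(vs ! ((p+1) mod ?m), vs ! p) \<in> conn (ends ` F)" by simp
  hence "(a,b) \<in> conn (ends ` F)" using ends_k[OF p(1)] p e conn_sym by (metis prod.inject)
  thus False using nc by simp
qed

lemma forest_empty: "is_forest ends {}"
  by (auto simp: is_forest_def is_circle_def)

lemma forest_subset: "is_forest ends F \<Longrightarrow> G \<subseteq> F \<Longrightarrow> is_forest ends G"
  by (auto simp: is_forest_def)



lemma unbal:
  fixes Q :: "nat \<Rightarrow> 'a::euclidean_space"
  assumes F: "\<forall>f\<in>F. P \<in> hyp Q ends gain f" and e: "P \<notin> hyp Q ends gain e" "ends e = (a,b)" "a \<noteq> b"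
    and c: "(a,b) \<in> conn (ends ` F)"
  shows "\<not> balanced ends gain (insert e F)"
proof -
  let ?Rs = "ends ` F \<union> (ends ` F)\<inverse>"
  have "(b,a) \<in> ?Rs\<^sup>*" by (fact conn_sym[OF c])
  from conn_path[OF this] obtain vs where vs: "vs \<noteq> []" "hd vs = b" "last vs = a" "distinct vs"
      "\<forall>k. Suc k < length vs \<longrightarrow> (vs!k, vs!Suc k) \<in> ?Rs"
    by blast
  define m where "m = length vs"
  have m2: "2 \<le> m"
  proof (rule ccontr)
    assume "\<not> 2 \<le> m"
    moreover have "length vs \<noteq> 0" using vs(1) by simp
    ultimately have "length vs = 1" using m_def by linarith
    hence "hd vs = last vs" using vs(1) by (simp add: hd_conv_nth last_conv_nth)
    thus False using vs e(3) by simp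
  qed
  define sel where "sel k = (SOME f. f \<in> F \<and> (ends f = (vs!k, vs!Suc k) \<or> ends f = (vs!Suc k, vs!k)))" for k
  have sel: "sel k \<in> F \<and> (ends (sel k) = (vs!k, vs!Suc k) \<or> ends (sel k) = (vs!Suc k, vs!k))"
    if "Suc k < m" for k
  proof -
    have "(vs!k, vs!Suc k) \<in> ?Rs" using vs(5) that m_def by simp
    hence "\<exists>f. f \<in> F \<and> (ends f = (vs!k, vs!Suc k) \<or> ends f = (vs!Suc k, vs!k))" by force
    thus ?thesis unfolding sel_def by (rule someI_ex)
  qed
  define pes where "pes = map sel [0..<m-1]"
  define es where "es = pes @ [e]"
  have lpes: "length pes = m - 1" by (simp add: pes_def)
  have les: "length es = m" using m2 by (simp add: es_def lpes)
  have pes_nth: "pes ! k = sel k" if "k < m - 1" for k using that by (simp add: pes_def)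
  have eF: "e \<notin> F" using F e(1) by blast
  have dpes: "distinct pes"
    unfolding distinct_conv_nth
  proof (intro allI impI)
    fix i j assume ij: "i < length pes" "j < length pes" "i \<noteq> j"
    show "pes ! i \<noteq> pes ! j"
    proof
      assume eq: "pes ! i = pes ! j"
      have si: "Suc i < m" "Suc j < m" using ij lpes by auto
      have "ends (sel i) = ends (sel j)" using eq ij lpes by (simp add: pes_nth)
      hence "vs!i = vs!j \<or> vs!i = vs!Suc j" using sel[OF si(1)] sel[OF si(2)] by auto
      moreover have "vs!Suc i = vs!j \<or> vs!Suc i = vs!Suc j"
        using sel[OF si(1)] sel[OF si(2)] \<open>ends (sel i) = ends (sel j)\<close> by auto
      moreover have d: "\<And>x y. x < m \<Longrightarrow> y < m \<Longrightarrow> vs!x = vs!y \<Longrightarrow> x = y"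
        using vs(4) m_def nth_eq_iff_index_eq by metis
      ultimately have "i = j \<or> i = Suc j" "Suc i = j \<or> Suc i = Suc j"
        using si by (meson Suc_lessD)+
      thus False using ij(3) by linarith
    qed
  qed
  have pesF: "set pes \<subseteq> F" using sel by (auto simp: pes_def)
  have des: "distinct es" using dpes pesF eF by (auto simp: es_def)
  have es_nth: "es ! k = (if k < m - 1 then sel k else e)" if "k < m" for k
    using that lpes by (auto simp: es_def nth_append pes_nth)
  have v0: "vs ! 0 = b" using vs by (simp add: hd_conv_nth)
  have vl: "vs ! (m - 1) = a" using vs by (simp add: last_conv_nth m_def)
  have modk: "(k + 1) mod m = (if k < m - 1 then Suc k else 0)" if "k < m" for k
  proof (cases "k < m - 1")
    case False
    hence "k + 1 = m" using that by linarith
    thus ?thesis using False by simp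
  qed simp
  have circ: "is_circle ends es vs"
    unfolding is_circle_def
  proof (intro conjI allI impI)
    show "length es = length vs" using les m_def by simp
    show "2 \<le> length es" using les m2 by simp
    show "distinct es" by (rule des)
    show "distinct vs" by (rule vs(4))
    fix k assume k: "k < length es"
    show "ends (es ! k) = (vs ! k, vs ! ((k + 1) mod length vs)) \<or>
          ends (es ! k) = (vs ! ((k + 1) mod length vs), vs ! k)"
    proof (cases "k < m - 1")
      case True
      then show ?thesis using sel[of k] k les modk[of k] es_nth[of k] m_def by auto
    next
      case False
      hence "k = m - 1" using k les by simp
      then show ?thesis using k les modk[of k] es_nth[of k] m_def e(2) v0 vl m2 by auto
    qed
  qed
  have ses: "set es \<subseteq> insert e F" using pesF by (auto simp: es_def)
  let ?p = "pot Q P"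
  define err where "err = gain e - (?p a - ?p b)"
  have errnz: "err \<noteq> 0" using e(1) e(2) unfolding err_def hyp_iff by simp
  have "circle_gain ends gain es vs = (\<Sum>k<m. (?p (vs!k) - ?p (vs!((k+1) mod m))) + (if k = m - 1 then err else 0))"
    unfolding circle_gain_def les m_def[symmetric]
  proof (rule sum.cong)
    fix k assume k: "k \<in> {..<m}"
    show "phi ends gain (es ! k) (vs ! k) (vs ! ((k + 1) mod m)) =
         (?p (vs!k) - ?p (vs!((k+1) mod m))) + (if k = m - 1 then err else 0)"
    proof (cases "k < m - 1")
      case True
      have "phi ends gain (sel k) (vs ! k) (vs ! Suc k) = ?p (vs!k) - ?p (vs!Suc k)"
        using sel[of k] True F by (intro phi_cons) auto
      then show ?thesis using True k modk[of k] es_nth[of k] by auto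
    next
      case False
      hence km: "k = m - 1" using k by simp
      have "phi ends gain e a b = gain e" using e(2) by (simp add: phi_def)
      then show ?thesis using km k modk[of k] es_nth[of k] v0 vl m2 by (simp add: err_def)
    qed
  qed simp
  also have "\<dots> = (\<Sum>k<m. ?p (vs!k) - ?p (vs!((k+1) mod m))) + err"
    using m2 by (simp add: sum.distrib)
  also have "(\<Sum>k<m. ?p (vs!k) - ?p (vs!((k+1) mod m))) = 0"
    by (rule cyc_tele) (use m2 in simp)
  finally have "circle_gain ends gain es vs \<noteq> 0" using errnz by simp
  thus ?thesis using circ ses unfolding balanced_def by blast
qed

lemma spanning_forest:
  assumes "finite S" "\<forall>e\<in>S. fst (ends e) \<in> {1..n} \<and> snd (ends e) \<in> {1..n}"
  shows "\<exists>F\<subseteq>S. is_forest ends F \<and> conn (ends ` F) = conn (ends ` S) \<and> card F + ncomp n (ends ` F) = n"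
  using assms
proof (induction S rule: finite_induct)
  case empty
  then show ?case using forest_empty ncomp_empty by auto
next
  case (insert e S)
  then obtain F where F: "F \<subseteq> S" "is_forest ends F" "conn (ends ` F) = conn (ends ` S)"
      "card F + ncomp n (ends ` F) = n" by auto
  obtain a b where ab: "ends e = (a,b)" by fastforce
  have abn: "a \<in> {1..n}" "b \<in> {1..n}" using insert.prems ab by (metis fst_conv snd_conv insertI1)+
  have fin: "finite F" using F(1) insert.hyps(1) by (rule finite_subset)
  show ?case
  proof (cases "(a,b) \<in> conn (ends ` F)")
    case True
    have "conn (ends ` insert e S) = conn (insert (a,b) (ends ` S))" using ab by simp
    also have "\<dots> = conn (ends ` S)" using True F(3) by (intro conn_insert_same) simp
    finally show ?thesis using F by (intro exI[of _ F]) auto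
  next
    case False
    have eF: "e \<notin> F" using F(1) insert.hyps(2) by auto
    have "is_forest ends (insert e F)" using F(2) ab False by (rule forest_insert)
    moreover have "conn (ends ` insert e F) = conn (ends ` insert e S)"
      using conn_insert_cong[OF F(3), of "(a,b)"] ab by (simp only: image_insert)
    moreover have "card (insert e F) + ncomp n (ends ` insert e F) = n"
    proof -
      have "ncomp n (insert (a,b) (ends ` F)) + 1 = ncomp n (ends ` F)"
        using abn False by (rule ncomp_insert)
      thus ?thesis using F(4) fin eF ab by simp
    qed
    ultimately show ?thesis using F(1) by (intro exI[of _ "insert e F"]) auto
  qed
qed



lemma LA1: "finite B \<Longrightarrow> card B = dim B \<Longrightarrow> independent (B :: 'a::euclidean_space set)"
  using card_eq_dim[of B B] span_superset by auto

lemma LA2: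
  fixes B :: "'a::euclidean_space set"
  assumes "independent B"
  shows "\<exists>P. \<forall>b\<in>B. inner P b = c b"
proof -
  obtain g :: "'a \<Rightarrow> real" where g: "linear g" "\<forall>x\<in>B. g x = c x"
    using real_vector.linear_independent_extend[OF assms] by blast
  define P where "P = (\<Sum>i\<in>Basis. g i *\<^sub>R i)"
  have "inner P x = g x" for x
  proof -
    have "g x = g (\<Sum>i\<in>Basis. (x \<bullet> i) *\<^sub>R i)" by (simp add: euclidean_representation)
    also have "\<dots> = (\<Sum>i\<in>Basis. (x \<bullet> i) * g i)"
      using g(1) by (simp add: linear_sum linear_scale)
    also have "\<dots> = inner P x" unfolding P_def inner_sum_left inner_scaleR_left
      by (intro sum.cong) (auto simp: inner_commute)
    finally show ?thesis by simp
  qed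
  thus ?thesis using g(2) by (intro exI[of _ P]) auto
qed

lemma LA3:
  fixes B :: "'a::euclidean_space set"
  assumes "\<And>w. (\<forall>b\<in>B. inner w b = 0) \<Longrightarrow> inner w v = 0"
  shows "v \<in> span B"
proof -
  obtain y z where yz: "y \<in> span B" "\<And>w. w \<in> span B \<Longrightarrow> orthogonal z w" "v = y + z"
    using orthogonal_subspace_decomp_exists[of B v] by blast
  have "\<forall>b\<in>B. inner z b = 0" using yz(2) span_base by (auto simp: orthogonal_def)
  hence "inner z v = 0" by (rule assms)
  moreover have "inner z y = 0" using yz(2)[OF yz(1)] by (simp add: orthogonal_def)
  ultimately have "inner z z = 0" using yz(3) by (simp add: inner_add_right)
  hence "z = 0" by simp
  thus ?thesis using yz by simp
qed

lemma psi_shift: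
  fixes Q :: "nat \<Rightarrow> 'a::euclidean_space"
  shows "psi Q a b (P + w) = psi Q a b P + 2 * inner w (Q b - Q a)"
  unfolding psi_def dist_norm power2_norm_eq_inner
  by (simp add: inner_simps algebra_simps inner_commute)

lemma psi_lin:
  fixes Q :: "nat \<Rightarrow> 'a::euclidean_space"
  shows "psi Q a b P = 2 * inner P (Q b - Q a) + (inner (Q a) (Q a) - inner (Q b) (Q b))"
  unfolding psi_def dist_norm power2_norm_eq_inner
  by (simp add: inner_simps algebra_simps inner_commute)

lemma hyp_psi: "P \<in> hyp Q ends gain e \<longleftrightarrow> psi Q (fst (ends e)) (snd (ends e)) P = gain e"
  by (simp add: hyp_def phi_def)

definition np :: "('e \<Rightarrow> nat \<times> nat) \<Rightarrow> 'e \<Rightarrow> nat \<times> nat" where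
  "np ends e = (min (fst (ends e)) (snd (ends e)), max (fst (ends e)) (snd (ends e)))"

definition dn :: "(nat \<Rightarrow> 'a::euclidean_space) \<Rightarrow> ('e \<Rightarrow> nat \<times> nat) \<Rightarrow> 'e \<Rightarrow> 'a" where
  "dn Q ends e = (\<lambda>(i,j). Q j - Q i) (np ends e)"

lemma dn_cases: "ends e = (a,b) \<Longrightarrow> dn Q ends e = Q b - Q a \<or> dn Q ends e = -(Q b - Q a)"
  by (auto simp: dn_def np_def min_def max_def)

lemma inner_dn_zero:
  assumes "ends e = (a,b)" "inner w (dn Q ends e) = 0"
  shows "inner w (Q b - Q a) = 0" "inner w (Q a - Q b) = 0"
  using dn_cases[where Q=Q and ends=ends and e=e, OF assms(1)] assms(2) by (auto simp: inner_minus_right inner_diff_right)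

lemma conn_orth:
  fixes Q :: "nat \<Rightarrow> 'a::euclidean_space"
  assumes w: "\<forall>f\<in>F. inner w (dn Q ends f) = 0" and xy: "(x,y) \<in> conn (ends ` F)"
  shows "inner w (Q y - Q x) = 0"
  using xy
proof (induction rule: rtrancl_induct)
  case base then show ?case by simp
next
  case (step y z)
  have "inner w (Q z - Q y) = 0"
  proof -
    from step(2) consider f where "f \<in> F" "ends f = (y,z)" | f where "f \<in> F" "ends f = (z,y)" by auto
    then show ?thesis
    proof cases
      case 1 then show ?thesis using w inner_dn_zero by metis
    next
      case 2 then show ?thesis using w inner_dn_zero by metis
    qed
  qed
  moreover have "Q z - Q x = (Q z - Q y) + (Q y - Q x)" by simp
  ultimately show ?case using step(3) by (simp only: inner_add_right)
qed

lemma conn_np: "conn (np ends ` F) = conn (ends ` F)"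
proof -
  have sw: "np ends f = ends f \<or> np ends f = prod.swap (ends f)" for f
    by (cases "ends f") (auto simp: np_def min_def max_def)
  have "np ends ` F \<union> (np ends ` F)\<inverse> = ends ` F \<union> (ends ` F)\<inverse>"
  proof (rule set_eqI)
    fix p :: "nat \<times> nat"
    obtain x y where p: "p = (x,y)" by fastforce
    show "p \<in> np ends ` F \<union> (np ends ` F)\<inverse> \<longleftrightarrow> p \<in> ends ` F \<union> (ends ` F)\<inverse>"
    proof
      assume "p \<in> np ends ` F \<union> (np ends ` F)\<inverse>"
      then obtain f where f: "f \<in> F" "np ends f = (x,y) \<or> np ends f = (y,x)" using p by auto
      then show "p \<in> ends ` F \<union> (ends ` F)\<inverse>" using sw[of f] p
        by (cases "ends f") (auto intro: rev_image_eqI)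
    next
      assume "p \<in> ends ` F \<union> (ends ` F)\<inverse>"
      then obtain f where f: "f \<in> F" "ends f = (x,y) \<or> ends f = (y,x)" using p by auto
      then show "p \<in> np ends ` F \<union> (np ends ` F)\<inverse>" using sw[of f] p
        by (auto intro: rev_image_eqI)
    qed
  qed
  thus ?thesis by simp
qed

lemma igp_dim:
  fixes Q :: "nat \<Rightarrow> 'a::euclidean_space"
  assumes igp: "ideal_general_position n Q"
    and F: "\<forall>e\<in>F. fst (ends e) \<in> {1..n} \<and> snd (ends e) \<in> {1..n} \<and> fst (ends e) \<noteq> snd (ends e)"
  shows "dim (dn Q ends ` F) = min (n - ncomp n (ends ` F)) DIM('a)"
proof -
  have T: "np ends ` F \<subseteq> {(i, j). i \<in> {1..n} \<and> j \<in> {1..n} \<and> i < j}"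
    using F by (auto simp: np_def min_def max_def)
  have "dim ((\<lambda>(i, j). Q j - Q i) ` (np ends ` F)) = min (n - ncomp n (np ends ` F)) DIM('a)"
    using igp T unfolding ideal_general_position_def by blast
  moreover have "(\<lambda>(i, j). Q j - Q i) ` (np ends ` F) = dn Q ends ` F"
    by (auto simp: dn_def image_image)
  moreover have "ncomp n (np ends ` F) = ncomp n (ends ` F)" by (rule ncomp_cong[OF conn_np])
  ultimately show ?thesis by simp
qed



lemma balanced_mono: "balanced ends gain S \<Longrightarrow> T \<subseteq> S \<Longrightarrow> balanced ends gain T"
  unfolding balanced_def by blast

lemma part1:
  fixes Q :: "nat \<Rightarrow> 'a::euclidean_space"
  assumes gg: "gain_graph n E ends"
    and H3: "\<forall>S \<subseteq> E. is_forest ends S \<and> card S = DIM('a) + 1 \<longrightarrow> (\<Inter>e\<in>S. hyp Q ends gain e) = {}"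
    and s: "s \<in> lattice_of Q E ends gain"
  shows "s = (\<Inter>e\<in>edges_of Q E ends gain s. hyp Q ends gain e)"
    and "balanced_flat n E ends gain (edges_of Q E ends gain s)"
    and "flat_rank n ends (edges_of Q E ends gain s) \<le> DIM('a)"
proof -
  let ?ES = "edges_of Q E ends gain s"
  obtain A where A: "s \<noteq> {}" "A \<subseteq> E" "s = (\<Inter>e\<in>A. hyp Q ends gain e)"
    using s unfolding lattice_of_def by blast
  have AES: "A \<subseteq> ?ES" using A unfolding edges_of_def by auto
  have ESE: "?ES \<subseteq> E" unfolding edges_of_def by auto
  have sub: "s \<subseteq> hyp Q ends gain e" if "e \<in> ?ES" for e using that unfolding edges_of_def by auto
  show s_eq: "s = (\<Inter>e\<in>?ES. hyp Q ends gain e)"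
  proof
    show "s \<subseteq> (\<Inter>e\<in>?ES. hyp Q ends gain e)" using sub by blast
    show "(\<Inter>e\<in>?ES. hyp Q ends gain e) \<subseteq> s" using A(3) AES by blast
  qed
  obtain P where P: "P \<in> s" using A(1) by blast
  have Pc: "\<forall>f\<in>?ES. P \<in> hyp Q ends gain f" using P sub by blast
  have fE: "finite E" and endsE: "\<forall>e\<in>E. fst (ends e) \<in> {1..n} \<and> snd (ends e) \<in> {1..n} \<and> fst (ends e) \<noteq> snd (ends e)"
    using gg unfolding gain_graph_def by auto
  show "balanced_flat n E ends gain ?ES"
    unfolding balanced_flat_def
  proof (intro conjI ballI impI)
    show "?ES \<subseteq> E" by (rule ESE)
    show "balanced ends gain ?ES" using Pc by (rule balanced_cons)
    fix e assume e: "e \<in> E - ?ES" and c: "(fst (ends e), snd (ends e)) \<in> comp_rel n (ends ` ?ES)"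
    obtain P' where P': "P' \<in> s" "P' \<notin> hyp Q ends gain e" using e unfolding edges_of_def by auto
    have P'c: "\<forall>f\<in>?ES. P' \<in> hyp Q ends gain f" using P' sub by blast
    have cc: "(fst (ends e), snd (ends e)) \<in> conn (ends ` ?ES)" using c unfolding comp_rel_conn by (simp add: case_prod_beta)
    have ne: "fst (ends e) \<noteq> snd (ends e)" using e endsE by auto
    show "\<not> balanced ends gain (insert e ?ES)"
      by (rule unbal[OF P'c P'(2) _ ne cc]) simp
  qed
  show "flat_rank n ends ?ES \<le> DIM('a)"
  proof (rule ccontr)
    assume "\<not> flat_rank n ends ?ES \<le> DIM('a)"
    hence gt: "n - ncomp n (ends ` ?ES) > DIM('a)" unfolding flat_rank_def ncomp_edges_def by simp
    have finES: "finite ?ES" using fE ESE finite_subset by blast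
    obtain F where F: "F \<subseteq> ?ES" "is_forest ends F" "conn (ends ` F) = conn (ends ` ?ES)"
        "card F + ncomp n (ends ` F) = n"
      using spanning_forest[OF finES, of ends n] endsE ESE by blast
    have "ncomp n (ends ` F) = ncomp n (ends ` ?ES)" using F(3) by (rule ncomp_cong)
    hence "card F \<ge> DIM('a) + 1" using F(4) gt by linarith
    then obtain F' where F': "F' \<subseteq> F" "card F' = DIM('a) + 1"
      by (meson obtain_subset_with_card_n)
    have "is_forest ends F'" using F(2) F'(1) by (rule forest_subset)
    moreover have "F' \<subseteq> E" using F'(1) F(1) ESE by blast
    ultimately have "(\<Inter>e\<in>F'. hyp Q ends gain e) = {}" using H3 F'(2) by blast
    moreover have "P \<in> (\<Inter>e\<in>F'. hyp Q ends gain e)" using Pc F'(1) F(1) by blast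
    ultimately show False by blast
  qed
qed





lemma part2:
  fixes Q :: "nat \<Rightarrow> 'a::euclidean_space"
  assumes gg: "gain_graph n E ends" and igp: "ideal_general_position n Q"
    and H3: "\<forall>S \<subseteq> E. is_forest ends S \<and> card S = DIM('a) + 1 \<longrightarrow> (\<Inter>e\<in>S. hyp Q ends gain e) = {}"
    and fl: "balanced_flat n E ends gain S" and rk: "flat_rank n ends S \<le> DIM('a)"
  shows "\<exists>s\<in>lattice_of Q E ends gain. edges_of Q E ends gain s = S"
proof -
  have fE: "finite E" and endsE: "\<forall>e\<in>E. fst (ends e) \<in> {1..n} \<and> snd (ends e) \<in> {1..n} \<and> fst (ends e) \<noteq> snd (ends e)"
    using gg unfolding gain_graph_def by auto
  have SE: "S \<subseteq> E" and bal: "balanced ends gain S"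
    and clo: "\<And>e. e \<in> E - S \<Longrightarrow> (fst (ends e), snd (ends e)) \<in> comp_rel n (ends ` S) \<Longrightarrow> \<not> balanced ends gain (insert e S)"
    using fl unfolding balanced_flat_def by auto
  have finS: "finite S" using fE SE finite_subset by blast
  obtain F where F: "F \<subseteq> S" "is_forest ends F" "conn (ends ` F) = conn (ends ` S)"
      "card F + ncomp n (ends ` F) = n"
    using spanning_forest[OF finS, of ends n] endsE SE by blast
  have ncF: "ncomp n (ends ` F) = ncomp n (ends ` S)" using F(3) by (rule ncomp_cong)
  have cardF: "card F \<le> DIM('a)" using rk F(4) ncF unfolding flat_rank_def ncomp_edges_def by linarith
  have finF: "finite F" using finS F(1) finite_subset by blast
  have endsF: "\<forall>e\<in>F. fst (ends e) \<in> {1..n} \<and> snd (ends e) \<in> {1..n} \<and> fst (ends e) \<noteq> snd (ends e)"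
    using endsE F(1) SE by blast
  let ?dn = "dn Q ends"
  have dimF: "dim (?dn ` F) = card F" using igp_dim[OF igp endsF] F(4) cardF by simp
  have c1: "card (?dn ` F) \<le> card F" using finF by (rule card_image_le)
  have c2: "dim (?dn ` F) \<le> card (?dn ` F)" using finF by (intro dim_le_card span_superset) auto
  have cF: "card (?dn ` F) = card F" using c1 c2 dimF by linarith
  have injF: "inj_on ?dn F" using eq_card_imp_inj_on[OF finF] cF by blast
  have indF: "independent (?dn ` F)" using finF cF dimF by (intro LA1) auto
  define K where "K e = inner (Q (fst (ends e))) (Q (fst (ends e))) - inner (Q (snd (ends e))) (Q (snd (ends e)))" for e
  define tgt where "tgt e = (if fst (ends e) < snd (ends e) then 1 else -1) * (gain e - K e) / 2" for e
  obtain P where P0: "\<forall>v\<in>?dn ` F. inner P v = tgt (inv_into F ?dn v)"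
    using LA2[OF indF, of "\<lambda>v. tgt (inv_into F ?dn v)"] by blast
  have PF: "P \<in> hyp Q ends gain e" if e: "e \<in> F" for e
  proof -
    obtain a b where ab: "ends e = (a,b)" by fastforce
    have ne: "a \<noteq> b" using endsF e ab by fastforce
    have ip: "inner P (?dn e) = tgt e" using P0 e injF by (simp add: inv_into_f_f)
    have "psi Q a b P = gain e"
    proof (cases "a < b")
      case True
      hence "?dn e = Q b - Q a" using ab by (simp add: dn_def np_def)
      then show ?thesis using ip True ab unfolding psi_lin tgt_def K_def by simp
    next
      case False
      hence "?dn e = Q a - Q b" using ab ne by (simp add: dn_def np_def)
      hence "inner P (Q b - Q a) = - tgt e" using ip by (simp add: inner_diff_right)
      then show ?thesis using False ab unfolding psi_lin tgt_def K_def by (simp add: field_simps)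
    qed
    thus ?thesis using ab by (simp add: hyp_psi)
  qed
  have PS: "P \<in> hyp Q ends gain e" if e: "e \<in> S" for e
  proof (rule ccontr)
    assume nP: "P \<notin> hyp Q ends gain e"
    have ne: "fst (ends e) \<noteq> snd (ends e)" using endsE e SE by blast
    have "(fst (ends e), snd (ends e)) \<in> conn (ends ` F)" using F(3) e by auto
    hence "\<not> balanced ends gain (insert e F)"
      using PF by (intro unbal[OF _ nP _ ne]) auto
    moreover have "insert e F \<subseteq> S" using e F(1) by blast
    ultimately show False using bal balanced_mono by blast
  qed
  define s where "s = (\<Inter>e\<in>S. hyp Q ends gain e)"
  have Ps: "P \<in> s" using PS by (simp add: s_def)
  have sL: "s \<in> lattice_of Q E ends gain" unfolding lattice_of_def using Ps SE s_def by blast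
  have "edges_of Q E ends gain s = S"
  proof
    show "S \<subseteq> edges_of Q E ends gain s" using SE unfolding edges_of_def s_def by blast
  next
    show "edges_of Q E ends gain s \<subseteq> S"
    proof
      fix e assume eE: "e \<in> edges_of Q E ends gain s"
      hence eE': "e \<in> E" and seh: "s \<subseteq> hyp Q ends gain e" unfolding edges_of_def by auto
      show "e \<in> S"
      proof (rule ccontr)
        assume eS: "e \<notin> S"
        obtain a b where ab: "ends e = (a,b)" by fastforce
        have abn: "a \<in> {1..n}" "b \<in> {1..n}" "a \<noteq> b" using endsE eE' ab by (metis fst_conv snd_conv)+
        have Pe: "P \<in> hyp Q ends gain e" using Ps seh by blast
        show False
        proof (cases "(a,b) \<in> conn (ends ` S)")
          case True
          hence "(fst (ends e), snd (ends e)) \<in> comp_rel n (ends ` S)" using ab abn by (simp add: comp_rel_conn)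
          hence "\<not> balanced ends gain (insert e S)" using clo eE' eS by blast
          moreover have "balanced ends gain (insert e S)" using PS Pe by (intro balanced_cons[of _ P]) auto
          ultimately show False by blast
        next
          case False
          hence nc: "(a,b) \<notin> conn (ends ` F)" using F(3) by simp
          have eF: "e \<notin> F" using eS F(1) by blast
          have forest': "is_forest ends (insert e F)" using F(2) ab nc by (rule forest_insert)
          have "ncomp n (insert (a,b) (ends ` F)) + 1 = ncomp n (ends ` F)"
            using abn(1,2) nc by (rule ncomp_insert)
          hence nc': "n - ncomp n (ends ` insert e F) = card F + 1" using F(4) ab by simp
          have cI: "card (insert e F) = card F + 1" using finF eF by simp
          show False
          proof (cases "card F = DIM('a)")
            case True
            have iE: "insert e F \<subseteq> E" using eE' F(1) SE by blast
            have "(\<Inter>f\<in>insert e F. hyp Q ends gain f) = {}"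
              using H3[rule_format, OF iE] forest' cI True by simp
            moreover have "P \<in> (\<Inter>f\<in>insert e F. hyp Q ends gain f)" using PF Pe by blast
            ultimately show False by blast
          next
            case False
            hence lt: "card F < DIM('a)" using cardF by simp
            have endsF': "\<forall>f\<in>insert e F. fst (ends f) \<in> {1..n} \<and> snd (ends f) \<in> {1..n} \<and> fst (ends f) \<noteq> snd (ends f)"
              using endsF abn ab by auto
            have dim1: "dim (?dn ` insert e F) = card F + 1"
              using igp_dim[OF igp endsF'] nc' lt by simp
            have "?dn e \<in> span (?dn ` F)"
            proof (rule LA3)
              fix w assume w: "\<forall>b\<in>?dn ` F. inner w b = 0"
              have wF: "\<forall>f\<in>F. inner w (?dn f) = 0" using w by blast
              have "P + w \<in> s"
                unfolding s_def
              proof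
                fix f assume fS: "f \<in> S"
                have "(fst (ends f), snd (ends f)) \<in> conn (ends ` F)" using F(3) fS by auto
                hence "inner w (Q (snd (ends f)) - Q (fst (ends f))) = 0" by (rule conn_orth[OF wF])
                thus "P + w \<in> hyp Q ends gain f" using PS[OF fS] by (simp add: hyp_psi psi_shift)
              qed
              hence "P + w \<in> hyp Q ends gain e" using seh by blast
              hence "inner w (Q b - Q a) = 0" using Pe ab by (simp add: hyp_psi psi_shift)
              thus "inner w (?dn e) = 0" using dn_cases[where Q=Q and ends=ends and e=e, OF ab]
                by (auto simp: inner_minus_right inner_diff_right)
            qed
            hence "dim (?dn ` insert e F) = dim (?dn ` F)" by (simp add: dim_insert)
            thus False using dim1 dimF by simp
          qed
        qed
      qed
    qed
  qed
  thus ?thesis using sL by blast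
qed


theorem proposition6p2:
  fixes n :: nat and E :: "'e set" and ends :: "'e \<Rightarrow> nat \<times> nat" and gain :: "'e \<Rightarrow> real"
    and Q :: "nat \<Rightarrow> 'a::euclidean_space"
  assumes "gain_graph n E ends"
    and "ideal_general_position n Q"
    and "\<forall>S \<subseteq> E. is_forest ends S \<and> card S = DIM('a) + 1 \<longrightarrow> (\<Inter>e\<in>S. hyp Q ends gain e) = {}"
  shows "general_position n E ends gain Q"
proof -
  let ?f = "edges_of Q E ends gain" and ?L = "lattice_of Q E ends gain"
  let ?Fl = "{S. balanced_flat n E ends gain S \<and> flat_rank n ends S \<le> DIM('a)}"
  note p1 = part1[OF assms(1) assms(3)]
  have ord: "t \<subseteq> s \<longleftrightarrow> ?f s \<subseteq> ?f t" if s: "s \<in> ?L" and t: "t \<in> ?L" for s t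
  proof
    assume "t \<subseteq> s" thus "?f s \<subseteq> ?f t" unfolding edges_of_def by blast
  next
    assume "?f s \<subseteq> ?f t"
    hence "(\<Inter>e\<in>?f t. hyp Q ends gain e) \<subseteq> (\<Inter>e\<in>?f s. hyp Q ends gain e)" by blast
    thus "t \<subseteq> s" using p1(1)[OF s] p1(1)[OF t] by simp
  qed
  have inj: "inj_on ?f ?L"
  proof (rule inj_onI)
    fix s t assume "s \<in> ?L" "t \<in> ?L" "?f s = ?f t"
    thus "s = t" using ord by blast
  qed
  have "?f ` ?L = ?Fl"
  proof
    show "?f ` ?L \<subseteq> ?Fl" using p1(2,3) by blast
    show "?Fl \<subseteq> ?f ` ?L"
    proof
      fix S assume "S \<in> ?Fl"
      hence "\<exists>s\<in>?L. ?f s = S" using part2[OF assms(1) assms(2) assms(3)] by blast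
      thus "S \<in> ?f ` ?L" by blast
    qed
  qed
  hence "bij_betw ?f ?L ?Fl" using inj unfolding bij_betw_def by blast
  thus ?thesis unfolding general_position_def using ord by blast
qed

end
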